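(* For any connected graphs $G$ and $H$, $v_s(G)\,v_s(H) \le \gamma_P(G \Box H)$. In addition, if $\gamma_P(G) = v_s(G)$ and $\gamma_P(H) = v_s(H)$, then $\gamma_P(G)\gamma_P(H) \le \gamma_P(G \Box H)$.
   Context: A strong support vertex of a graph is a vertex adjacent to at least two leaves (vertices of degree $1$); $v_s(G)$ denotes the number of strong support vertices of $G$. For $S \subseteq V(G)$: initially all vertices of $S$ and their neighbors are observed; then, repeatedly, any vertex that is the only unobserved neighbor of some observed vertex becomes observed. $S$ is a power dominating set if eventually all vertices are observed; $\gamma_P(G)$ is the minimum size of a power dominating set. $G\Box H$ denotes the Cartesian product: vertex set $V(G)\times V(H)$, with $(g_1,h_1)\sim(g_2,h_2)$ iff ($g_1=g_2$ and $h_1h_2\in E(H)$) or ($h_1=h_2$ and $g_1g_2\in E(G)$). *)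

theory Defs
  imports Main
begin

definition graph :: "'a set \<Rightarrow> ('a \<Rightarrow> 'a \<Rightarrow> bool) \<Rightarrow> bool" where
  "graph V E \<longleftrightarrow> finite V \<and> (\<forall>u v. E u v \<longrightarrow> u \<in> V \<and> v \<in> V)
     \<and> (\<forall>u v. E u v \<longrightarrow> E v u) \<and> (\<forall>v. \<not> E v v)"

definition connected_graph :: "'a set \<Rightarrow> ('a \<Rightarrow> 'a \<Rightarrow> bool) \<Rightarrow> bool" where
  "connected_graph V E \<longleftrightarrow> graph V E \<and> V \<noteq> {} \<and> (\<forall>u\<in>V. \<forall>v\<in>V. E\<^sup>*\<^sup>* u v)"

definition degree :: "'a set \<Rightarrow> ('a \<Rightarrow> 'a \<Rightarrow> bool) \<Rightarrow> 'a \<Rightarrow> nat" where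
  "degree V E v = card {u \<in> V. E v u}"

definition leaf :: "'a set \<Rightarrow> ('a \<Rightarrow> 'a \<Rightarrow> bool) \<Rightarrow> 'a \<Rightarrow> bool" where
  "leaf V E v \<longleftrightarrow> v \<in> V \<and> degree V E v = 1"

definition strong_support :: "'a set \<Rightarrow> ('a \<Rightarrow> 'a \<Rightarrow> bool) \<Rightarrow> 'a \<Rightarrow> bool" where
  "strong_support V E v \<longleftrightarrow> v \<in> V \<and> card {u \<in> V. E v u \<and> leaf V E u} \<ge> 2"

definition vs :: "'a set \<Rightarrow> ('a \<Rightarrow> 'a \<Rightarrow> bool) \<Rightarrow> nat" where
  "vs V E = card {v \<in> V. strong_support V E v}"

(* Set of vertices eventually observed from S: the least set closed under the
   domination step and the propagation rule (monotone, so equal to the final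
   set of the iterative process). *)
inductive_set observed :: "'a set \<Rightarrow> ('a \<Rightarrow> 'a \<Rightarrow> bool) \<Rightarrow> 'a set \<Rightarrow> 'a set"
  for V E S where
  dom_self: "v \<in> S \<Longrightarrow> v \<in> V \<Longrightarrow> v \<in> observed V E S"
| dom_nbr: "v \<in> S \<Longrightarrow> v \<in> V \<Longrightarrow> u \<in> V \<Longrightarrow> E v u \<Longrightarrow> u \<in> observed V E S"
| propagate: "w \<in> observed V E S \<Longrightarrow> u \<in> V \<Longrightarrow> E w u \<Longrightarrow>
     (\<forall>x\<in>V. E w x \<and> x \<noteq> u \<longrightarrow> x \<in> observed V E S) \<Longrightarrow> u \<in> observed V E S"

definition power_dominating :: "'a set \<Rightarrow> ('a \<Rightarrow> 'a \<Rightarrow> bool) \<Rightarrow> 'a set \<Rightarrow> bool" where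
  "power_dominating V E S \<longleftrightarrow> S \<subseteq> V \<and> observed V E S = V"

definition gammaP :: "'a set \<Rightarrow> ('a \<Rightarrow> 'a \<Rightarrow> bool) \<Rightarrow> nat" where
  "gammaP V E = (LEAST k. \<exists>S. power_dominating V E S \<and> card S = k)"

definition cart_vertices :: "'a set \<Rightarrow> 'b set \<Rightarrow> ('a \<times> 'b) set" where
  "cart_vertices VG VH = VG \<times> VH"

definition cart_edges :: "('a \<Rightarrow> 'a \<Rightarrow> bool) \<Rightarrow> ('b \<Rightarrow> 'b \<Rightarrow> bool) \<Rightarrow>
    ('a \<times> 'b) \<Rightarrow> ('a \<times> 'b) \<Rightarrow> bool" where
  "cart_edges EG EH = (\<lambda>(g1, h1) (g2, h2). (g1 = g2 \<and> EH h1 h2) \<or> (h1 = h2 \<and> EG g1 g2))"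

end

theory Submission
  imports Defs
begin

lemma observed_sub: "x \<in> observed V E S \<Longrightarrow> x \<in> V"
  by (induction rule: observed.induct) auto

lemma leaf_unique:
  assumes "leaf V E l" "x \<in> V" "y \<in> V" "E l x" "E l y" shows "x = y"
proof -
  have "card {u \<in> V. E l u} = 1" using assms(1) unfolding leaf_def degree_def by simp
  then obtain z where "{u \<in> V. E l u} = {z}" by (meson card_1_singletonE)
  then show ?thesis using assms(2-5) by (metis (mono_tags, lifting) mem_Collect_eq singletonD)
qed

lemma two_leaves:
  assumes "strong_support V E g"
  shows "\<exists>l1 l2. l1 \<noteq> l2 \<and> l1 \<in> V \<and> l2 \<in> V \<and> E g l1 \<and> E g l2 \<and> leaf V E l1 \<and> leaf V E l2"
proof -
  have "2 \<le> card {u \<in> V. E g u \<and> leaf V E u}" using assms unfolding strong_support_def by simp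
  then have "Suc 1 \<le> card {u \<in> V. E g u \<and> leaf V E u}" by simp
  then obtain a B where aB: "{u \<in> V. E g u \<and> leaf V E u} = insert a B" "a \<notin> B" "1 \<le> card B"
    unfolding card_le_Suc_iff by blast
  then obtain b where "b \<in> B" by fastforce
  then have "a \<in> {u \<in> V. E g u \<and> leaf V E u}" "b \<in> {u \<in> V. E g u \<and> leaf V E u}" "a \<noteq> b"
    using aB by auto
  then show ?thesis by blast
qed

lemma leaf_not_ss:
  assumes "graph V E" "leaf V E l" shows "\<not> strong_support V E l"
proof
  assume "strong_support V E l"
  then have "2 \<le> card {u \<in> V. E l u \<and> leaf V E u}" unfolding strong_support_def by simp
  moreover have "card {u \<in> V. E l u \<and> leaf V E u} \<le> card {u \<in> V. E l u}"
    using assms(1) unfolding graph_def by (intro card_mono) auto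
  moreover have "card {u \<in> V. E l u} = 1" using assms(2) unfolding leaf_def degree_def by simp
  ultimately show False by simp
qed

definition sig :: "'a set \<Rightarrow> ('a \<Rightarrow> 'a \<Rightarrow> bool) \<Rightarrow> 'a \<Rightarrow> 'a" where
  "sig V E x = (if strong_support V E x then x else (THE g. g \<in> V \<and> E x g))"

lemma sig_leaf:
  assumes "graph V E" "leaf V E l" "g \<in> V" "E l g" shows "sig V E l = g"
proof -
  have "(THE g. g \<in> V \<and> E l g) = g"
    using assms leaf_unique[OF assms(2)] by (intro the_equality) auto
  then show ?thesis using leaf_not_ss[OF assms(1,2)] unfolding sig_def by simp
qed

lemma sig_ss: "strong_support V E g \<Longrightarrow> sig V E g = g"
  unfolding sig_def by simp

lemma nbr_char:
  assumes "graph VG EG" "graph VH EH"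
    "leaf VG EG a" "EG g a" "leaf VH EH b" "EH h b" "g \<in> VG" "h \<in> VH"
    "c \<in> VG" "d \<in> VH" "cart_edges EG EH (c,d) (a,b)"
  shows "(c = a \<and> d = h) \<or> (d = b \<and> c = g)"
proof -
  have sG: "EG x y \<Longrightarrow> EG y x" for x y using assms(1) unfolding graph_def by blast
  have sH: "EH x y \<Longrightarrow> EH y x" for x y using assms(2) unfolding graph_def by blast
  from assms(11) have "(c = a \<and> EH d b) \<or> (d = b \<and> EG c a)" unfolding cart_edges_def by simp
  then show ?thesis
  proof
    assume "c = a \<and> EH d b"
    then show ?thesis using leaf_unique[OF assms(5), of d h] assms sH by blast
  next
    assume "d = b \<and> EG c a"
    then show ?thesis using leaf_unique[OF assms(3), of c g] assms sG by blast
  qed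
qed

lemma key:
  assumes gG: "graph VG EG" and gH: "graph VH EH"
    and G: "l1 \<noteq> l2" "l1 \<in> VG" "l2 \<in> VG" "EG g l1" "EG g l2" "leaf VG EG l1" "leaf VG EG l2" "g \<in> VG"
    and H: "m1 \<noteq> m2" "m1 \<in> VH" "m2 \<in> VH" "EH h m1" "EH h m2" "leaf VH EH m1" "leaf VH EH m2" "h \<in> VH"
    and S: "S \<inter> ({g,l1,l2} \<times> {h,m1,m2}) = {}"
    and x: "x \<in> observed (VG \<times> VH) (cart_edges EG EH) S"
  shows "x \<notin> {l1,l2} \<times> {m1,m2}"
  using x
proof (induction rule: observed.induct)
  case (dom_self v)
  then show ?case using S by auto
next
  case (dom_nbr v u)
  obtain c d where v: "v = (c,d)" by fastforce
  show ?case
  proof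
    assume u: "u \<in> {l1,l2} \<times> {m1,m2}"
    then obtain a b where ab: "u = (a,b)" "a \<in> {l1,l2}" "b \<in> {m1,m2}" by blast
    have "(c = a \<and> d = h) \<or> (d = b \<and> c = g)"
      apply (rule nbr_char[OF gG gH, of a g b h])
      using ab G H dom_nbr v by auto
    then have "v \<in> {g,l1,l2} \<times> {h,m1,m2}" using ab v by auto
    then show False using S dom_nbr by auto
  qed
next
  case (propagate w u)
  obtain c d where w: "w = (c,d)" by fastforce
  show ?case
  proof
    assume u: "u \<in> {l1,l2} \<times> {m1,m2}"
    then obtain a b where ab: "u = (a,b)" "a \<in> {l1,l2}" "b \<in> {m1,m2}" by blast
    have "(c = a \<and> d = h) \<or> (d = b \<and> c = g)"
      apply (rule nbr_char[OF gG gH, of a g b h])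
      using ab G H propagate.prems propagate.hyps(2,3) w observed_sub[OF propagate.hyps(1)] by auto
    then show False
    proof
      assume cd: "c = a \<and> d = h"
      obtain b' where b': "b' \<in> {m1,m2}" "b' \<noteq> b" using H(1) by blast
      have "(a,b') \<in> VG \<times> VH" using ab b' G H by auto
      moreover have "cart_edges EG EH w (a,b')" using w cd b' H unfolding cart_edges_def by auto
      moreover have "(a,b') \<noteq> u" using ab b' by auto
      ultimately have "(a,b') \<notin> {l1,l2} \<times> {m1,m2}" using propagate.IH(2) by blast
      then show False using ab b' by auto
    next
      assume cd: "d = b \<and> c = g"
      obtain a' where a': "a' \<in> {l1,l2}" "a' \<noteq> a" using G(1) by blast
      have "(a',b) \<in> VG \<times> VH" using ab a' G H by auto
      moreover have "cart_edges EG EH w (a',b)" using w cd a' G unfolding cart_edges_def by auto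
      moreover have "(a',b) \<noteq> u" using ab a' by auto
      ultimately have "(a',b) \<notin> {l1,l2} \<times> {m1,m2}" using propagate.IH(2) by blast
      then show False using ab a' by auto
    qed
  qed
qed

lemma hit:
  assumes gG: "graph VG EG" and gH: "graph VH EH"
    and pd: "power_dominating (cart_vertices VG VH) (cart_edges EG EH) S"
    and g: "strong_support VG EG g" and h: "strong_support VH EH h"
  shows "(g,h) \<in> (\<lambda>(x,y). (sig VG EG x, sig VH EH y)) ` S"
proof -
  obtain l1 l2 where G: "l1 \<noteq> l2" "l1 \<in> VG" "l2 \<in> VG" "EG g l1" "EG g l2" "leaf VG EG l1" "leaf VG EG l2"
    using two_leaves[OF g] by blast
  obtain m1 m2 where H: "m1 \<noteq> m2" "m1 \<in> VH" "m2 \<in> VH" "EH h m1" "EH h m2" "leaf VH EH m1" "leaf VH EH m2"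
    using two_leaves[OF h] by blast
  have gV: "g \<in> VG" using g unfolding strong_support_def by simp
  have hV: "h \<in> VH" using h unfolding strong_support_def by simp
  have sG: "EG x y \<Longrightarrow> EG y x" for x y using gG unfolding graph_def by blast
  have sH: "EH x y \<Longrightarrow> EH y x" for x y using gH unfolding graph_def by blast
  have "S \<inter> ({g,l1,l2} \<times> {h,m1,m2}) \<noteq> {}"
  proof
    assume S: "S \<inter> ({g,l1,l2} \<times> {h,m1,m2}) = {}"
    have "(l1,m1) \<in> observed (VG \<times> VH) (cart_edges EG EH) S"
      using pd G H unfolding power_dominating_def cart_vertices_def by auto
    from key[OF gG gH G gV H hV S this] show False by auto
  qed
  then obtain x y where xy: "(x,y) \<in> S" "x \<in> {g,l1,l2}" "y \<in> {h,m1,m2}" by blast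
  have "sig VG EG x = g"
  proof -
    have "x = g \<or> x = l1 \<or> x = l2" using xy(2) by simp
    moreover have "sig VG EG l1 = g" by (rule sig_leaf[OF gG G(6) gV sG[OF G(4)]])
    moreover have "sig VG EG l2 = g" by (rule sig_leaf[OF gG G(7) gV sG[OF G(5)]])
    ultimately show ?thesis using sig_ss[OF g] by metis
  qed
  moreover have "sig VH EH y = h"
  proof -
    have "y = h \<or> y = m1 \<or> y = m2" using xy(3) by simp
    moreover have "sig VH EH m1 = h" by (rule sig_leaf[OF gH H(6) hV sH[OF H(4)]])
    moreover have "sig VH EH m2 = h" by (rule sig_leaf[OF gH H(7) hV sH[OF H(5)]])
    ultimately show ?thesis using sig_ss[OF h] by metis
  qed
  ultimately show ?thesis using xy(1) by force
qed


lemma pd_exists: "power_dominating V E V"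
  unfolding power_dominating_def by (auto intro: observed.dom_self dest: observed_sub)

theorem lemma3p5:
  fixes VG :: "'a set" and EG :: "'a \<Rightarrow> 'a \<Rightarrow> bool"
    and VH :: "'b set" and EH :: "'b \<Rightarrow> 'b \<Rightarrow> bool"
  assumes "connected_graph VG EG" and "connected_graph VH EH"
  shows "vs VG EG * vs VH EH \<le> gammaP (cart_vertices VG VH) (cart_edges EG EH)
         \<and> (gammaP VG EG = vs VG EG \<and> gammaP VH EH = vs VH EH \<longrightarrow>
           gammaP VG EG * gammaP VH EH \<le> gammaP (cart_vertices VG VH) (cart_edges EG EH))"
proof -
  have gG: "graph VG EG" and gH: "graph VH EH" using assms unfolding connected_graph_def by auto
  have fin: "finite (cart_vertices VG VH)" using gG gH unfolding graph_def cart_vertices_def by auto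
  let ?P = "\<lambda>k. \<exists>S. power_dominating (cart_vertices VG VH) (cart_edges EG EH) S \<and> card S = k"
  have "?P (gammaP (cart_vertices VG VH) (cart_edges EG EH))"
    unfolding gammaP_def by (rule LeastI_ex) (use pd_exists in blast)
  then obtain S where pd: "power_dominating (cart_vertices VG VH) (cart_edges EG EH) S"
    and cS: "card S = gammaP (cart_vertices VG VH) (cart_edges EG EH)" by blast
  have finS: "finite S" using pd fin unfolding power_dominating_def by (metis finite_subset)
  have sub: "{v \<in> VG. strong_support VG EG v} \<times> {v \<in> VH. strong_support VH EH v}
     \<subseteq> (\<lambda>(x,y). (sig VG EG x, sig VH EH y)) ` S"
    using hit[OF gG gH pd] by auto
  have "vs VG EG * vs VH EH = card ({v \<in> VG. strong_support VG EG v} \<times> {v \<in> VH. strong_support VH EH v})"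
    unfolding vs_def by (simp add: card_cartesian_product)
  also have "\<dots> \<le> card ((\<lambda>(x,y). (sig VG EG x, sig VH EH y)) ` S)"
    by (rule card_mono[OF _ sub]) (use finS in simp)
  also have "\<dots> \<le> card S" by (rule card_image_le[OF finS])
  finally have main: "vs VG EG * vs VH EH \<le> gammaP (cart_vertices VG VH) (cart_edges EG EH)"
    using cS by simp
  then show ?thesis by simp
qed

end
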